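(* Let $\mathbf 1=(1,1,1,1)^t\in\mathbb C^4$, $A=\mathbf 1\mathbf 1^*-I$ (the $4\times4$ matrix with $0$ on the diagonal and $1$ off the diagonal), and $t\in\mathbb R$. Then \[\|A+tI\|_m=\begin{cases}|t|&\text{if } t\ge1\text{ or } t\le-3,\\ \tfrac12|3-t|&\text{if } -3\le t\le1.\end{cases}\] In particular $\|A\|_m=\tfrac32$, $\|I\|_m=1$, and $\|A-I\|_m=2>(\|A\|_m^2+\|I\|_m^2)^{1/2}$.
   Context: For a $4\times4$ matrix $B=[b_{ij}]$, $\|B\|_m$ is the norm of the Schur multiplier $R=[r_{ij}]\mapsto[b_{ij}r_{ij}]$ on $4\times4$ complex matrices with the operator norm. *)

theory Defs
  imports "HOL-Analysis.Analysis"
begin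

type_synonym cmat4 = "complex ^ 4 ^ 4"

definition op_norm :: "cmat4 \<Rightarrow> real" where
  "op_norm R = onorm (\<lambda>x. R *v x)"

definition schur_prod :: "cmat4 \<Rightarrow> cmat4 \<Rightarrow> cmat4" where
  "schur_prod B R = (\<chi> i j. B $ i $ j * R $ i $ j)"

definition schur_mult_norm :: "cmat4 \<Rightarrow> real" where
  "schur_mult_norm B = (SUP R\<in>{R. op_norm R \<le> 1}. op_norm (schur_prod B R))"

definition Amat :: cmat4 where
  "Amat = (\<chi> i j. if i = j then 0 else 1)"

end

theory Submission imports Defs begin
definition flip :: "(4 \<Rightarrow> real) \<Rightarrow> complex^4 \<Rightarrow> complex^4" where
 "flip s y = (\<chi> j. complex_of_real (s j) * y$j)"
definition h1 :: "4 \<Rightarrow> real" where "h1 j = (if j = 1 \<or> j = 3 then -1 else 1)"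
definition h2 :: "4 \<Rightarrow> real" where "h2 j = (if j = 1 \<or> j = 2 then -1 else 1)"
definition h3 :: "4 \<Rightarrow> real" where "h3 j = h1 j * h2 j"
definition Bm :: "real \<Rightarrow> real \<Rightarrow> cmat4" where
 "Bm d e = (\<chi> i j. if i = j then complex_of_real d else complex_of_real e)"
definition Wm :: cmat4 where
 "Wm = (\<chi> i j. if i = j then 1/2 else -1/2)"

lemma decomp:
  shows "schur_prod (Bm d e) R *v x =
     ((d+3*e)/4) *\<^sub>R (R *v x) + ((d-e)/4) *\<^sub>R (flip h1 (R *v flip h1 x) + flip h2 (R *v flip h2 x) + flip h3 (R *v flip h3 x))"
  unfolding vec_eq_iff forall_4
  apply (simp add: schur_prod_def Bm_def flip_def h1_def h2_def h3_def matrix_vector_mult_def sum_4 vector_scaleR_component)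
  apply (simp add: scaleR_conv_of_real field_simps)
  done

lemma norm_flip:
  assumes "\<And>j. \<bar>s j\<bar> = 1"
  shows "norm (flip s y) = norm y"
  unfolding norm_vec_def L2_set_def flip_def
  by (simp add: norm_mult assms)

lemma h_abs: "\<bar>h1 j\<bar> = 1" "\<bar>h2 j\<bar> = 1" "\<bar>h3 j\<bar> = 1"
  by (auto simp: h1_def h2_def h3_def abs_mult)

lemma opn_le: "op_norm R \<le> 1 \<Longrightarrow> norm (R *v y) \<le> norm y"
proof -
  assume a: "op_norm R \<le> 1"
  have "norm (R *v y) \<le> op_norm R * norm y"
    unfolding op_norm_def by (rule onorm) simp
  also have "\<dots> \<le> norm y" using mult_right_mono[OF a norm_ge_zero] by simp
  finally show ?thesis .
qed

lemma upper_vec: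
  assumes "op_norm R \<le> 1"
  shows "norm (schur_prod (Bm d e) R *v x) \<le> (\<bar>d+3*e\<bar>/4 + 3*\<bar>d-e\<bar>/4) * norm x"
proof -
  have f: "norm (flip h (R *v flip h x)) \<le> norm x" if "\<And>j. \<bar>h j\<bar> = 1" for h
    using opn_le[OF assms, of "flip h x"] norm_flip[OF that] by simp
  have "norm (schur_prod (Bm d e) R *v x) \<le> \<bar>(d+3*e)/4\<bar> * norm (R *v x) + \<bar>(d-e)/4\<bar> *
     (norm (flip h1 (R *v flip h1 x)) + norm (flip h2 (R *v flip h2 x)) + norm (flip h3 (R *v flip h3 x)))"
    unfolding decomp
    by (smt (verit, best) mult_left_mono norm_scaleR norm_triangle_ineq abs_ge_zero)
  also have "\<dots> \<le> \<bar>(d+3*e)/4\<bar> * norm x + \<bar>(d-e)/4\<bar> * (3 * norm x)"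
    using f[of h1] f[of h2] f[of h3] h_abs opn_le[OF assms, of x]
    by (intro add_mono mult_left_mono) auto
  finally show ?thesis by (simp add: algebra_simps)
qed

lemma upper_op:
  assumes "op_norm R \<le> 1"
  shows "op_norm (schur_prod (Bm d e) R) \<le> \<bar>d+3*e\<bar>/4 + 3*\<bar>d-e\<bar>/4"
  unfolding op_norm_def using upper_vec[OF assms] by (intro onorm_le) auto

lemma op_norm_zero: "op_norm 0 = 0"
proof -
  have "(*v) (0::cmat4) = (\<lambda>x. 0)" by (auto simp: fun_eq_iff vec_eq_iff matrix_vector_mult_def)
  then show ?thesis unfolding op_norm_def by (simp add: onorm_zero)
qed

lemma upper: "schur_mult_norm (Bm d e) \<le> \<bar>d+3*e\<bar>/4 + 3*\<bar>d-e\<bar>/4"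
  unfolding schur_mult_norm_def
  apply (rule cSUP_least)
  apply (metis (mono_tags) empty_iff mem_Collect_eq op_norm_zero zero_le_one)
  using upper_op by auto

lemma bdd: "bdd_above ((\<lambda>R. op_norm (schur_prod (Bm d e) R)) ` {R. op_norm R \<le> 1})"
  using upper_op by (auto intro!: bdd_aboveI)

lemma lower_gen:
  assumes "op_norm R \<le> 1" "M = schur_prod (Bm d e) R" "M *v x = c *\<^sub>R x" "x \<noteq> 0"
  shows "\<bar>c\<bar> \<le> schur_mult_norm (Bm d e)"
proof -
  have "\<bar>c\<bar> * norm x = norm (M *v x)" using assms(3) by simp
  also have "\<dots> \<le> op_norm M * norm x"
    unfolding op_norm_def by (rule onorm) simp
  finally have "\<bar>c\<bar> \<le> op_norm M" using assms(4) by simp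
  also have "op_norm M \<le> schur_mult_norm (Bm d e)"
    unfolding schur_mult_norm_def assms(2) using assms(1) bdd
    by (intro cSUP_upper) auto
  finally show ?thesis .
qed

lemma opI: "op_norm (mat 1) \<le> 1"
  unfolding op_norm_def by (intro onorm_le) simp

lemma Wiso: "norm (Wm *v x) = norm x"
proof -
  have "(norm (Wm *v x))^2 = (norm x)^2"
    unfolding norm_vec_def L2_set_def
    apply (simp add: sum_4 cmod_power2 Wm_def matrix_vector_mult_def)
    apply (simp add: power2_eq_square algebra_simps)
    done
  then show ?thesis by (simp add: power2_eq_iff_nonneg)
qed

lemma opW: "op_norm Wm \<le> 1"
  unfolding op_norm_def by (intro onorm_le) (simp add: Wiso)

lemma lower1: "\<bar>d\<bar> \<le> schur_mult_norm (Bm d e)"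
  apply (rule lower_gen[where x=1 and R="mat 1"])
  apply (rule opI) apply (rule refl)
  apply (simp add: vec_eq_iff forall_4 schur_prod_def Bm_def matrix_vector_mult_def sum_4 mat_def vector_scaleR_component)
  apply (simp add: scaleR_conv_of_real)
  apply simp
  done

lemma lower2: "\<bar>(d-3*e)/2\<bar> \<le> schur_mult_norm (Bm d e)"
  apply (rule lower_gen[where x=1 and R="Wm"])
  apply (rule opW) apply (rule refl)
  apply (simp add: vec_eq_iff forall_4 schur_prod_def Bm_def matrix_vector_mult_def sum_4 Wm_def vector_scaleR_component)
  apply (simp add: scaleR_conv_of_real)
  apply (simp add: field_simps)
  done

lemma exact: "schur_mult_norm (Bm d e) = \<bar>d+3*e\<bar>/4 + 3*\<bar>d-e\<bar>/4"
  if "max \<bar>d\<bar> \<bar>(d-3*e)/2\<bar> \<ge> \<bar>d+3*e\<bar>/4 + 3*\<bar>d-e\<bar>/4"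
  using upper[of d e] lower1[of d e] lower2[of d e] that by linarith

lemma eqs: "Amat + t *\<^sub>R (mat 1 :: cmat4) = Bm t 1" "(mat 1 :: cmat4) = Bm 1 0"
  "Amat = Bm 0 1" "Amat - mat 1 = Bm (-1) 1"
  by (auto simp: vec_eq_iff Amat_def Bm_def mat_def vector_scaleR_component, auto simp: scaleR_conv_of_real)

theorem mainTheorem15:
  shows "(\<forall>t::real. schur_mult_norm (Amat + t *\<^sub>R (mat 1 :: cmat4)) =
            (if t \<ge> 1 \<or> t \<le> -3 then \<bar>t\<bar> else \<bar>3 - t\<bar> / 2))
       \<and> schur_mult_norm Amat = 3 / 2
       \<and> schur_mult_norm (mat 1 :: cmat4) = 1
       \<and> schur_mult_norm (Amat - mat 1) = 2
       \<and> schur_mult_norm (Amat - mat 1) >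
           sqrt ((schur_mult_norm Amat)\<^sup>2 + (schur_mult_norm (mat 1 :: cmat4))\<^sup>2)"
proof -
  have T: "schur_mult_norm (Amat + t *\<^sub>R (mat 1 :: cmat4)) =
            (if t \<ge> 1 \<or> t \<le> -3 then \<bar>t\<bar> else \<bar>3 - t\<bar> / 2)" for t
  proof -
    have "schur_mult_norm (Bm t 1) = \<bar>t+3*1\<bar>/4 + 3*\<bar>t-1\<bar>/4"
      by (rule exact) (auto simp: max_def abs_if field_simps)
    then show ?thesis unfolding eqs(1) by (cases "t+3<0") (auto simp: abs_if field_simps)
  qed
  have A: "schur_mult_norm Amat = 3/2" using T[of 0] by simp
  have I: "schur_mult_norm (mat 1 :: cmat4) = 1"
  proof -
    have "schur_mult_norm (Bm 1 0) = \<bar>1+3*0\<bar>/4 + 3*\<bar>1-0\<bar>/4"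
      by (rule exact) (auto simp: max_def)
    then show ?thesis unfolding eqs(2) by simp
  qed
  have M: "schur_mult_norm (Amat - mat 1) = 2"
  proof -
    have "schur_mult_norm (Bm (-1) 1) = \<bar>-1+3*1\<bar>/4 + 3*\<bar>-1-1\<bar>/4"
      by (rule exact) (auto simp: max_def)
    then show ?thesis unfolding eqs(4) by simp
  qed
  have "sqrt ((3/2)\<^sup>2 + 1\<^sup>2) < sqrt (2\<^sup>2)"
    by (rule real_sqrt_less_mono) (simp add: power2_eq_square)
  then have "sqrt ((3/2)\<^sup>2 + 1\<^sup>2) < 2" by simp
  then show ?thesis unfolding A I M using T by simp
qed

end
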